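(* Let $d\ge1$, let $\ell_1>\ell_2>\dots>\ell_d\ge1$ and $r_1,\dots,r_d\ge1$ be integers, and let $n_1,\dots,n_d$ be positive integers with $n_i\ge 2r_i\ell_i$. For each $i$ fix a gap sequence $\vec g(i)=(g_1(i),\dots,g_{r_i}(i))$ of integers with $g_j(i)\ge2\ell_i$ and $\sum_j g_j(i)=n_i$. Let $P_d(\vec n,\vec\ell,\vec r)$ be the number of tuples $(p_1,\dots,p_d)$ with $p_i\in\mathbb Z/n_i\mathbb Z$ that are valid, meaning: there are no indices $i<j$, $a\in\{1,\dots,r_i\}$, $b\in\{1,\dots,r_j\}$ such that $e_a(i)\in W_i(\ell_j)$ and $e_b(j)\in W_j(\ell_j)$. Then this number does not depend on the choice of gap sequences, and it satisfies $P_0=1$, $P_1(n_1,\ell_1,r_1)=n_1$, and for $d\ge1$ $$P_d(\vec n,\vec\ell,\vec r)=\prod_{i=1}^d n_i-4\sum_{1\le i<j\le d} r_ir_j\ell_j^2\, P_{i-1}(\vec n(i),\vec\ell(i),\vec r(i))\prod_{i<k<j}(n_k-2r_k\ell_k)\prod_{k>j}n_k,$$ where $\vec n(i)=(n_1-2r_1\ell_i,\dots,n_{i-1}-2r_{i-1}\ell_i)$, $\vec\ell(i)=(\ell_1-\ell_i,\dots,\ell_{i-1}-\ell_i)$, $\vec r(i)=(r_1,\dots,r_{i-1})$. In particular, if $n_i=n-\ell_i-2\sum_{j\ne i}r_j\min(\ell_i,\ell_j)$ for each $i$, then $P_d$ is a monic polynomial in $n$ of degree $d$ (with $P_1=n-\ell_1$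 when $d=1$).
   Context: Notation: for track $i$ (a cycle $\mathbb Z/n_i\mathbb Z$ whose elements are represented by $1,\dots,n_i$, with $n_i$ called the boundary), given position $p_i$ and gap sequence $\vec g(i)$, the $a$-th run on track $i$ occupies the $\ell_i$ consecutive positions starting at $p_i+g_1(i)+\dots+g_{a-1}(i)$, and its end is $e_a(i)=p_i+g_1(i)+\dots+g_{a-1}(i)+\ell_i-1 \pmod{n_i}$. For $m\le n_i/2$, the window $W_i(m)\subseteq\mathbb Z/n_i\mathbb Z$ is the set of $2m$ residues $\{n_i-m+1,\dots,n_i,1,2,\dots,m\}$ (the $2m$ positions nearest the boundary). Empty products equal $1$. *)

theory Defs
  imports Main "HOL-Library.FuncSet" "HOL-Computational_Algebra.Polynomial"
begin

text \<open>Tracks are indexed by 1..d. Parameters: n (boundaries), l (run lengths),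
  r (number of runs), g i j (j-th gap on track i, j = 1..r i), p i (position on track i,
  represented by an integer in 1..n i).\<close>

definition window :: "int \<Rightarrow> int \<Rightarrow> int set" where
  "window n m = {n - m + 1 .. n} \<union> {1 .. m}"

definition in_window :: "int \<Rightarrow> int \<Rightarrow> int \<Rightarrow> bool" where
  "in_window n m x \<longleftrightarrow> (\<exists>w \<in> window n m. x mod n = w mod n)"

text \<open>End of the a-th run on track i (as an integer; it is read modulo n i).\<close>
definition run_end ::
  "(nat \<Rightarrow> nat) \<Rightarrow> (nat \<Rightarrow> nat \<Rightarrow> nat) \<Rightarrow> (nat \<Rightarrow> int) \<Rightarrow> nat \<Rightarrow> nat \<Rightarrow> int" where
  "run_end l g p i a = p i + (\<Sum>c = 1..<a. int (g i c)) + int (l i) - 1"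

definition valid ::
  "nat \<Rightarrow> (nat \<Rightarrow> nat) \<Rightarrow> (nat \<Rightarrow> nat) \<Rightarrow> (nat \<Rightarrow> nat) \<Rightarrow> (nat \<Rightarrow> nat \<Rightarrow> nat)
    \<Rightarrow> (nat \<Rightarrow> int) \<Rightarrow> bool" where
  "valid d n l r g p \<longleftrightarrow>
     \<not> (\<exists>i j a b. 1 \<le> i \<and> i < j \<and> j \<le> d \<and> a \<in> {1..r i} \<and> b \<in> {1..r j} \<and>
          in_window (int (n i)) (int (l j)) (run_end l g p i a) \<and>
          in_window (int (n j)) (int (l j)) (run_end l g p j b))"

definition count_valid ::
  "nat \<Rightarrow> (nat \<Rightarrow> nat) \<Rightarrow> (nat \<Rightarrow> nat) \<Rightarrow> (nat \<Rightarrow> nat) \<Rightarrow> (nat \<Rightarrow> nat \<Rightarrow> nat) \<Rightarrow> nat" where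
  "count_valid d n l r g =
     card {p \<in> Pi\<^sub>E {1..d} (\<lambda>i. {1 .. int (n i)}). valid d n l r g p}"

definition params_ok :: "nat \<Rightarrow> (nat \<Rightarrow> nat) \<Rightarrow> (nat \<Rightarrow> nat) \<Rightarrow> (nat \<Rightarrow> nat) \<Rightarrow> bool" where
  "params_ok d n l r \<longleftrightarrow>
     (\<forall>i \<in> {1..d}. 1 \<le> l i \<and> 1 \<le> r i \<and> 0 < n i \<and> 2 * r i * l i \<le> n i) \<and>
     (\<forall>i j. 1 \<le> i \<longrightarrow> i < j \<longrightarrow> j \<le> d \<longrightarrow> l j < l i)"

definition gaps_ok ::
  "nat \<Rightarrow> (nat \<Rightarrow> nat) \<Rightarrow> (nat \<Rightarrow> nat) \<Rightarrow> (nat \<Rightarrow> nat) \<Rightarrow> (nat \<Rightarrow> nat \<Rightarrow> nat) \<Rightarrow> bool" where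
  "gaps_ok d n l r g \<longleftrightarrow>
     (\<forall>i \<in> {1..d}. (\<forall>j \<in> {1..r i}. 2 * l i \<le> g i j) \<and> (\<Sum>j = 1..r i. g i j) = n i)"

definition Pcount :: "nat \<Rightarrow> (nat \<Rightarrow> nat) \<Rightarrow> (nat \<Rightarrow> nat) \<Rightarrow> (nat \<Rightarrow> nat) \<Rightarrow> nat" where
  "Pcount d n l r = count_valid d n l r (SOME g. gaps_ok d n l r g)"

end

theory Submission
  imports Defs
begin

function Qf :: "nat \<Rightarrow> (nat \<Rightarrow> int) \<Rightarrow> (nat \<Rightarrow> nat) \<Rightarrow> (nat \<Rightarrow> nat) \<Rightarrow> int" where
 "Qf d N L r = (\<Prod>i = 1..d. N i) - 4 * (\<Sum>i = 1..d. \<Sum>j = i + 1..d.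
     int (r i) * int (r j) * int (L j) ^ 2
     * Qf (i - 1) (\<lambda>k. N k - 2 * int (r k) * int (L i)) (\<lambda>k. L k - L i) r
     * (\<Prod>k \<in> {i<..<j}. N k - 2 * int (r k) * int (L k))
     * (\<Prod>k \<in> {j<..d}. N k))"
  by pat_completeness auto
termination by (relation "measure (\<lambda>(d,_,_,_). d)") auto

declare Qf.simps[simp del]

lemma Qf_cong: "(\<And>k. k \<in> {1..d} \<Longrightarrow> N k = N' k) \<Longrightarrow> (\<And>k. k \<in> {1..d} \<Longrightarrow> L k = L' k)
  \<Longrightarrow> (\<And>k. k \<in> {1..d} \<Longrightarrow> r k = r' k) \<Longrightarrow> Qf d N L r = Qf d N' L' r'"
proof (induction d arbitrary: N N' L L' r r' rule: less_induct)
  case (less d)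
  have IH: "Qf (i-1) (\<lambda>k. N k - 2 * int (r k) * int (L i)) (\<lambda>k. L k - L i) r
     = Qf (i-1) (\<lambda>k. N' k - 2 * int (r' k) * int (L' i)) (\<lambda>k. L' k - L' i) r'" if "i \<in> {1..d}" for i
    by (rule less.IH) (use that in \<open>auto simp: less.prems\<close>)
  show ?case
    apply (subst Qf.simps) apply (subst (2) Qf.simps)
    apply (intro arg_cong2[where f="(-)"] arg_cong2[where f="(*)"] refl prod.cong sum.cong)
    apply (auto simp only: IH)
    apply (auto simp: less.prems)
    done
qed
lemma Qf_Suc: "Qf (Suc e) N L r = N (Suc e) * Qf e N L r
   - 4 * int (r (Suc e)) * int (L (Suc e)) ^ 2 * (\<Sum>i = 1..e. int (r i)
        * Qf (i - 1) (\<lambda>k. N k - 2 * int (r k) * int (L i)) (\<lambda>k. L k - L i) r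
        * (\<Prod>k \<in> {i<..<Suc e}. N k - 2 * int (r k) * int (L k)))"
proof -
  define T where "T i j = int (r i) * int (r j) * int (L j) ^ 2
     * Qf (i - 1) (\<lambda>k. N k - 2 * int (r k) * int (L i)) (\<lambda>k. L k - L i) r
     * (\<Prod>k \<in> {i<..<j}. N k - 2 * int (r k) * int (L k))" for i j
  have Qd: "Qf d N L r = (\<Prod>i = 1..d. N i) - 4 * (\<Sum>i = 1..d. \<Sum>j = i + 1..d. T i j * (\<Prod>k \<in> {j<..d}. N k))" for d
    by (subst Qf.simps) (simp add: T_def)
  have A: "(\<Prod>i=1..Suc e. N i) = N (Suc e) * (\<Prod> i=1..e. N i)"
    by (simp add: prod.nat_ivl_Suc')
  have B: "(\<Sum>j=i+1..Suc e. T i j * (\<Prod>k \<in> {j<..Suc e}. N k)) = N (Suc e) * (\<Sum>j=i+1..e. T i j * (\<Prod>k \<in> {j<..e}. N k)) + T i (Suc e)"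
    if "i \<in> {1..e}" for i
  proof -
    have "(\<Prod>k \<in> {j<..Suc e}. N k) = N (Suc e) * (\<Prod>k \<in> {j<..e}. N k)" if "j \<le> e" for j
    proof -
      have "{j<..Suc e} = insert (Suc e) {j<..e}" using that by auto
      then show ?thesis by simp
    qed
    moreover have "{i+1..Suc e} = insert (Suc e) {i+1..e}" using that by auto
    ultimately show ?thesis using that
      by (simp add: sum_distrib_left) (intro sum.cong; simp)
  qed
  have C: "(\<Sum>i = 1..Suc e. \<Sum>j = i + 1..Suc e. T i j * (\<Prod>k \<in> {j<..Suc e}. N k))
     = (\<Sum>i = 1..e. \<Sum>j = i + 1..Suc e. T i j * (\<Prod>k \<in> {j<..Suc e}. N k))"
    by (simp add: sum.nat_ivl_Suc')
  have D: "(\<Sum>i = 1..e. \<Sum>j = i + 1..Suc e. T i j * (\<Prod>k \<in> {j<..Suc e}. N k))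
     = N (Suc e) * (\<Sum>i = 1..e. \<Sum>j=i+1..e. T i j * (\<Prod>k \<in> {j<..e}. N k)) + (\<Sum>i = 1..e. T i (Suc e))"
    by (subst sum.cong[OF refl B]) (simp_all add: sum.distrib sum_distrib_left)
  show ?thesis
    unfolding Qd[of "Suc e"] Qd[of e] A C D
    by (simp add: T_def algebra_simps sum_distrib_left)
qed

definition AV :: "nat \<Rightarrow> (nat \<Rightarrow> 'a \<Rightarrow> nat) \<Rightarrow> (nat \<Rightarrow> nat) \<Rightarrow> (nat \<Rightarrow> 'a) \<Rightarrow> bool" where
  "AV e D L p \<longleftrightarrow> (\<forall>i j. 1 \<le> i \<longrightarrow> i < j \<longrightarrow> j \<le> e \<longrightarrow> \<not> (D i (p i) \<le> L j \<and> D j (p j) \<le> L j))"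

definition inst :: "nat \<Rightarrow> (nat \<Rightarrow> 'a set) \<Rightarrow> (nat \<Rightarrow> 'a \<Rightarrow> nat) \<Rightarrow> (nat \<Rightarrow> nat) \<Rightarrow> (nat \<Rightarrow> nat) \<Rightarrow> (nat \<Rightarrow> nat) \<Rightarrow> bool" where
  "inst d S D N L r \<longleftrightarrow> (\<forall>k\<in>{1..d}. finite (S k) \<and> card (S k) = N k \<and>
      (\<forall>m \<le> L k. card {x \<in> S k. D k x \<le> m} = 2 * r k * m)) \<and>
     (\<forall>i j. 1 \<le> i \<longrightarrow> i < j \<longrightarrow> j \<le> d \<longrightarrow> L j < L i)"

definition VS where "VS e S D L = {p \<in> Pi\<^sub>E {1..e} S. AV e D L p}"
definition ES where "ES e S D L m = {p \<in> VS e S D L. \<exists>i\<in>{1..e}. D i (p i) \<le> m}"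
definition FS where "FS e S D L m = {p \<in> VS e S D L. \<forall>i\<in>{1..e}. m < D i (p i)}"

lemma card_ext:
  assumes "a \<notin> I" "X \<subseteq> Pi\<^sub>E I S" "T \<subseteq> S a"
  shows "card {p \<in> Pi\<^sub>E (insert a I) S. restrict p I \<in> X \<and> p a \<in> T} = card X * card T"
proof -
  let ?B = "{p \<in> Pi\<^sub>E (insert a I) S. restrict p I \<in> X \<and> p a \<in> T}"
  have r1: "restrict (q(a:=t)) I = q" if "q \<in> Pi\<^sub>E I S" for q t
  proof (rule ext)
    fix x show "restrict (q(a:=t)) I x = q x"
      using that assms(1) by (cases "x \<in> I") (auto simp: PiE_def extensional_def)
  qed
  have r2: "(restrict p I)(a := p a) = p" if "p \<in> Pi\<^sub>E (insert a I) S" for p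
  proof (rule ext)
    fix x show "((restrict p I)(a := p a)) x = p x"
      using that by (cases "x \<in> insert a I") (auto simp: PiE_def extensional_def)
  qed
  have r3: "q(a:=t) \<in> Pi\<^sub>E (insert a I) S" if "q \<in> Pi\<^sub>E I S" "t \<in> S a" for q t
    using that by (simp add: PiE_insert_eq) (metis (no_types, lifting) case_prod_conv image_eqI mem_Sigma_iff)
  have "bij_betw (\<lambda>(q,t). q(a := t)) (X \<times> T) ?B"
  proof (rule bij_betw_byWitness[where f'="\<lambda>p. (restrict p I, p a)"])
    show "\<forall>x\<in>X \<times> T. (\<lambda>p. (restrict p I, p a)) ((\<lambda>(q, t). q(a := t)) x) = x"
    proof
      fix x assume x: "x \<in> X \<times> T"
      obtain q t where qt: "x = (q,t)" "q \<in> X" "t \<in> T" using x by auto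
      have "q \<in> Pi\<^sub>E I S" using qt assms by auto
      then show "(\<lambda>p. (restrict p I, p a)) ((\<lambda>(q, t). q(a := t)) x) = x" using qt r1 by simp
    qed
    show "\<forall>y\<in>?B. (\<lambda>(q, t). q(a := t)) ((\<lambda>p. (restrict p I, p a)) y) = y"
      using r2 by simp
    show "(\<lambda>(q, t). q(a := t)) ` (X \<times> T) \<subseteq> ?B"
    proof
      fix y assume "y \<in> (\<lambda>(q, t). q(a := t)) ` (X \<times> T)"
      then obtain q t where qt: "y = q(a:=t)" "q \<in> X" "t \<in> T" by auto
      have q: "q \<in> Pi\<^sub>E I S" using qt assms by auto
      have "t \<in> S a" using qt assms by auto
      then show "y \<in> ?B" using qt q r1 r3 by simp
    qed
    show "(\<lambda>p. (restrict p I, p a)) ` ?B \<subseteq> X \<times> T"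
      by auto
  qed
  then have "card (X \<times> T) = card ?B" by (rule bij_betw_same_card)
  then show ?thesis by (simp add: card_cartesian_product)
qed

lemma AV_cong: "(\<And>i. i \<in> {1..e} \<Longrightarrow> p i = q i) \<Longrightarrow> AV e D L p = AV e D L q"
proof -
  assume h: "\<And>i. i \<in> {1..e} \<Longrightarrow> p i = q i"
  have h2: "p i = q i \<and> p j = q j" if "1 \<le> i" "i < j" "j \<le> e" for i j
    using h that by auto
  show ?thesis unfolding AV_def
    apply (intro iffI allI impI)
    using h2 apply metis
    using h2 by metis
qed

lemma AV_restrict: "AV e D L (restrict p {1..e'}) = AV e D L p" if "e \<le> e'"
  by (rule AV_cong) (use that in auto)

lemma AV_Suc: "AV (Suc e) D L p \<longleftrightarrow> AV e D L p \<and>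
   \<not> (D (Suc e) (p (Suc e)) \<le> L (Suc e) \<and> (\<exists>i\<in>{1..e}. D i (p i) \<le> L (Suc e)))"
  unfolding AV_def
proof
  assume H: "\<forall>i j. 1 \<le> i \<longrightarrow> i < j \<longrightarrow> j \<le> Suc e \<longrightarrow> \<not> (D i (p i) \<le> L j \<and> D j (p j) \<le> L j)"
  show "(\<forall>i j. 1 \<le> i \<longrightarrow> i < j \<longrightarrow> j \<le> e \<longrightarrow> \<not> (D i (p i) \<le> L j \<and> D j (p j) \<le> L j)) \<and>
   \<not> (D (Suc e) (p (Suc e)) \<le> L (Suc e) \<and> (\<exists>i\<in>{1..e}. D i (p i) \<le> L (Suc e)))"
  proof (intro conjI allI impI notI)
    fix i j assume "1 \<le> i" "i < j" "j \<le> e" "D i (p i) \<le> L j \<and> D j (p j) \<le> L j"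
    then show False using H[rule_format, of i j] by simp
  next
    assume "D (Suc e) (p (Suc e)) \<le> L (Suc e) \<and> (\<exists>i\<in>{1..e}. D i (p i) \<le> L (Suc e))"
    then obtain i where "i \<in> {1..e}" "D i (p i) \<le> L (Suc e)" "D (Suc e) (p (Suc e)) \<le> L (Suc e)" by blast
    then show False using H[rule_format, of i "Suc e"] by simp
  qed
next
  assume H: "(\<forall>i j. 1 \<le> i \<longrightarrow> i < j \<longrightarrow> j \<le> e \<longrightarrow> \<not> (D i (p i) \<le> L j \<and> D j (p j) \<le> L j)) \<and>
   \<not> (D (Suc e) (p (Suc e)) \<le> L (Suc e) \<and> (\<exists>i\<in>{1..e}. D i (p i) \<le> L (Suc e)))"
  show "\<forall>i j. 1 \<le> i \<longrightarrow> i < j \<longrightarrow> j \<le> Suc e \<longrightarrow> \<not> (D i (p i) \<le> L j \<and> D j (p j) \<le> L j)"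
  proof (intro allI impI notI)
    fix i j assume a: "1 \<le> i" "i < j" "j \<le> Suc e" "D i (p i) \<le> L j \<and> D j (p j) \<le> L j"
    show False
    proof (cases "j = Suc e")
      case True
      then have "i \<in> {1..e}" using a by auto
      then show False using H a True by blast
    next
      case False
      then have "j \<le> e" using a by simp
      then show False using H a by blast
    qed
  qed
qed

lemma inst_mono: "inst d S D N L r \<Longrightarrow> e \<le> d \<Longrightarrow> inst e S D N L r"
  unfolding inst_def by auto

lemma fin_PiE: "inst d S D N L r \<Longrightarrow> e \<le> d \<Longrightarrow> finite (Pi\<^sub>E {1..e} S)"
  by (rule finite_PiE) (auto simp: inst_def)

lemma VS_sub: "VS e S D L \<subseteq> Pi\<^sub>E {1..e} S" by (auto simp: VS_def)
lemma ES_sub: "ES e S D L m \<subseteq> Pi\<^sub>E {1..e} S" by (auto simp: VS_def ES_def)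
lemma FS_sub: "FS e S D L m \<subseteq> Pi\<^sub>E {1..e} S" by (auto simp: VS_def FS_def)

lemma VS_split: "card (VS e S D L) = card (ES e S D L m) + card (FS e S D L m)"
  if "finite (Pi\<^sub>E {1..e} S)"
proof -
  have "VS e S D L = ES e S D L m \<union> FS e S D L m" by (auto simp: ES_def FS_def dest: leI)
  moreover have "ES e S D L m \<inter> FS e S D L m = {}"
  proof -
    { fix p assume "p \<in> ES e S D L m" "p \<in> FS e S D L m"
      then obtain i where "i \<in> {1..e}" "D i (p i) \<le> m" "m < D i (p i)" unfolding ES_def FS_def by blast
      then have False by simp }
    then show ?thesis by blast
  qed
  moreover have "finite (ES e S D L m)" by (rule finite_subset[OF ES_sub that])
  moreover have "finite (FS e S D L m)" by (rule finite_subset[OF FS_sub that])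
  ultimately show ?thesis by (simp add: card_Un_disjoint)
qed

lemma restrict_in_PiE: "p \<in> Pi\<^sub>E {1..Suc e} S \<Longrightarrow> restrict p {1..e} \<in> Pi\<^sub>E {1..e} S"
  by (auto simp: PiE_iff)

lemma arith1: "(F::int) * (2 * r * l) + (E + F) * (N - 2 * r * l) = N * (E + F) - 2 * r * l * E"
  by (simp add: algebra_simps)
lemma arith2: "(F::int) * (2 * r * m) + E * (N - 2 * r * l) = 2 * r * m * F + (N - 2 * r * l) * E"
  by (simp add: algebra_simps)

lemma VS_Suc_card:
  assumes I: "inst d S D N L r" and e: "Suc e \<le> d"
  shows "int (card (VS (Suc e) S D L)) = int (N (Suc e)) * int (card (VS e S D L))
     - 2 * int (r (Suc e)) * int (L (Suc e)) * int (card (ES e S D L (L (Suc e))))"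
proof -
  let ?c = "Suc e"
  define Y where "Y = {x \<in> S ?c. D ?c x \<le> L ?c}"
  define Z where "Z = {x \<in> S ?c. \<not> D ?c x \<le> L ?c}"
  have fin: "finite (S ?c)" "card (S ?c) = N ?c" "card Y = 2 * r ?c * L ?c"
    using I e by (auto simp: inst_def Y_def)
  have YS: "Y \<subseteq> S ?c" and ZS: "Z \<subseteq> S ?c" by (auto simp: Y_def Z_def)
  have "Z = S ?c - Y" by (auto simp: Y_def Z_def)
  then have cZ: "card Z = N ?c - 2 * r ?c * L ?c" using fin YS by (simp add: card_Diff_subset finite_subset)
  have YN: "2 * r ?c * L ?c \<le> N ?c" using fin YS by (metis card_mono)
  have ins: "{1..Suc e} = insert (Suc e) {1..e}" by auto
  have nin: "Suc e \<notin> {1..e}" by simp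
  define A1 where "A1 = {p \<in> Pi\<^sub>E {1..Suc e} S. restrict p {1..e} \<in> FS e S D L (L ?c) \<and> p ?c \<in> Y}"
  define A2 where "A2 = {p \<in> Pi\<^sub>E {1..Suc e} S. restrict p {1..e} \<in> VS e S D L \<and> p ?c \<in> Z}"
  have c1: "card A1 = card (FS e S D L (L ?c)) * card Y"
    unfolding A1_def ins by (rule card_ext[OF nin FS_sub[of e S D L "L ?c"] YS])
  have c2: "card A2 = card (VS e S D L) * card Z"
    unfolding A2_def ins by (rule card_ext[OF nin VS_sub[of e S D L] ZS])
  have eq: "VS (Suc e) S D L = A1 \<union> A2"
  proof (rule set_eqI)
    fix p
    show "p \<in> VS (Suc e) S D L \<longleftrightarrow> p \<in> A1 \<union> A2"
    proof (cases "p \<in> Pi\<^sub>E {1..Suc e} S")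
      case True
      then have R: "restrict p {1..e} \<in> Pi\<^sub>E {1..e} S" by (rule restrict_in_PiE)
      have pc: "p ?c \<in> S ?c" using True by auto
      have AVr: "AV e D L (restrict p {1..e}) = AV e D L p" by (rule AV_restrict) simp
      have m1: "p \<in> VS (Suc e) S D L \<longleftrightarrow> AV e D L p \<and> \<not> (D ?c (p ?c) \<le> L ?c \<and> (\<exists>i\<in>{1..e}. D i (p i) \<le> L ?c))"
        using True by (simp add: VS_def AV_Suc)
      have m2: "p \<in> A1 \<longleftrightarrow> AV e D L p \<and> (\<forall>i\<in>{1..e}. \<not> D i (p i) \<le> L ?c) \<and> D ?c (p ?c) \<le> L ?c"
        using True R pc unfolding A1_def FS_def VS_def Y_def mem_Collect_eq AVr by (simp add: not_le)
      have m3: "p \<in> A2 \<longleftrightarrow> AV e D L p \<and> \<not> D ?c (p ?c) \<le> L ?c"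
        using True R pc unfolding A2_def VS_def Z_def mem_Collect_eq AVr by simp
      show ?thesis unfolding Un_iff m1 m2 m3 by blast
    next
      case False
      then show ?thesis by (simp add: VS_def A1_def A2_def)
    qed
  qed
  have disj: "A1 \<inter> A2 = {}" by (auto simp: A1_def A2_def Y_def Z_def)
  have finA: "finite A1" "finite A2"
    unfolding A1_def A2_def by (rule finite_subset[OF _ fin_PiE[OF I e]], blast)+
  have "card (VS (Suc e) S D L) = card A1 + card A2" by (simp add: eq card_Un_disjoint finA disj)
  moreover have "card (VS e S D L) = card (ES e S D L (L ?c)) + card (FS e S D L (L ?c))"
    by (rule VS_split) (rule fin_PiE[OF I], use e in simp)
  ultimately have h: "card (VS (Suc e) S D L) = card (FS e S D L (L ?c)) * (2 * r ?c * L ?c) + card (VS e S D L) * card Z"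
    and h2: "card (VS e S D L) = card (ES e S D L (L ?c)) + card (FS e S D L (L ?c))"
    using c1 c2 fin by auto
  have iZ: "int (card Z) = int (N ?c) - 2 * int (r ?c) * int (L ?c)" using cZ YN by (simp add: of_nat_diff)
  have "int (card (VS (Suc e) S D L)) = int (card (FS e S D L (L ?c))) * (2 * int (r ?c) * int (L ?c))
     + int (card (VS e S D L)) * int (card Z)" unfolding h by simp
  also have "\<dots> = int (N ?c) * int (card (VS e S D L)) - 2 * int (r ?c) * int (L ?c) * int (card (ES e S D L (L ?c)))"
    unfolding iZ h2 of_nat_add by (rule arith1)
  finally show ?thesis .
qed

lemma ES_Suc_card:
  assumes I: "inst d S D N L r" and e: "Suc e \<le> d" and m: "m \<le> L (Suc e)"
  shows "int (card (ES (Suc e) S D L m)) = 2 * int (r (Suc e)) * int m * int (card (FS e S D L (L (Suc e))))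
     + (int (N (Suc e)) - 2 * int (r (Suc e)) * int (L (Suc e))) * int (card (ES e S D L m))"
proof -
  let ?c = "Suc e"
  define Y where "Y = {x \<in> S ?c. D ?c x \<le> m}"
  define Y' where "Y' = {x \<in> S ?c. D ?c x \<le> L ?c}"
  define Z where "Z = {x \<in> S ?c. \<not> D ?c x \<le> L ?c}"
  have fin: "finite (S ?c)" "card (S ?c) = N ?c" "card Y = 2 * r ?c * m" "card Y' = 2 * r ?c * L ?c"
    using I e m by (auto simp: inst_def Y_def Y'_def)
  have YS: "Y \<subseteq> S ?c" and Y'S: "Y' \<subseteq> S ?c" and ZS: "Z \<subseteq> S ?c" by (auto simp: Y_def Y'_def Z_def)
  have "Z = S ?c - Y'" by (auto simp: Y'_def Z_def)
  then have cZ: "card Z = N ?c - 2 * r ?c * L ?c" using fin Y'S by (simp add: card_Diff_subset finite_subset)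
  have YN: "2 * r ?c * L ?c \<le> N ?c" using fin Y'S by (metis card_mono)
  have ins: "{1..Suc e} = insert (Suc e) {1..e}" by auto
  have nin: "Suc e \<notin> {1..e}" by simp
  define A1 where "A1 = {p \<in> Pi\<^sub>E {1..Suc e} S. restrict p {1..e} \<in> FS e S D L (L ?c) \<and> p ?c \<in> Y}"
  define A2 where "A2 = {p \<in> Pi\<^sub>E {1..Suc e} S. restrict p {1..e} \<in> ES e S D L m \<and> p ?c \<in> Z}"
  have c1: "card A1 = card (FS e S D L (L ?c)) * card Y"
    unfolding A1_def ins by (rule card_ext[OF nin FS_sub[of e S D L "L ?c"] YS])
  have c2: "card A2 = card (ES e S D L m) * card Z"
    unfolding A2_def ins by (rule card_ext[OF nin ES_sub[of e S D L m] ZS])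
  have eq: "ES (Suc e) S D L m = A1 \<union> A2"
  proof (rule set_eqI)
    fix p
    show "p \<in> ES (Suc e) S D L m \<longleftrightarrow> p \<in> A1 \<union> A2"
    proof (cases "p \<in> Pi\<^sub>E {1..Suc e} S")
      case True
      then have R: "restrict p {1..e} \<in> Pi\<^sub>E {1..e} S" by (rule restrict_in_PiE)
      have pc: "p ?c \<in> S ?c" using True by auto
      have AVr: "AV e D L (restrict p {1..e}) = AV e D L p" by (rule AV_restrict) simp
      have ex: "(\<exists>i\<in>{1..Suc e}. D i (p i) \<le> m) \<longleftrightarrow> D ?c (p ?c) \<le> m \<or> (\<exists>i\<in>{1..e}. D i (p i) \<le> m)"
        unfolding ins by simp
      have m1: "p \<in> ES (Suc e) S D L m \<longleftrightarrow> AV e D L p \<and> \<not> (D ?c (p ?c) \<le> L ?c \<and> (\<exists>i\<in>{1..e}. D i (p i) \<le> L ?c))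
           \<and> (D ?c (p ?c) \<le> m \<or> (\<exists>i\<in>{1..e}. D i (p i) \<le> m))"
        using True unfolding ES_def VS_def mem_Collect_eq AV_Suc ex by simp
      have m2: "p \<in> A1 \<longleftrightarrow> AV e D L p \<and> (\<forall>i\<in>{1..e}. \<not> D i (p i) \<le> L ?c) \<and> D ?c (p ?c) \<le> m"
        using True R pc unfolding A1_def FS_def VS_def Y_def mem_Collect_eq AVr by (simp add: not_le)
      have m3: "p \<in> A2 \<longleftrightarrow> AV e D L p \<and> (\<exists>i\<in>{1..e}. D i (p i) \<le> m) \<and> \<not> D ?c (p ?c) \<le> L ?c"
        using True R pc unfolding A2_def ES_def VS_def Z_def mem_Collect_eq AVr by simp
      have tr: "D i (p i) \<le> m \<Longrightarrow> D i (p i) \<le> L ?c" for i using m by linarith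
      show ?thesis unfolding Un_iff m1 m2 m3 using tr m by (meson le_trans)
    next
      case False
      then show ?thesis by (simp add: VS_def ES_def A1_def A2_def)
    qed
  qed
  have disj: "A1 \<inter> A2 = {}" using m by (auto simp: A1_def A2_def Y_def Z_def)
  have finA: "finite A1" "finite A2"
    unfolding A1_def A2_def by (rule finite_subset[OF _ fin_PiE[OF I e]], blast)+
  have "card (ES (Suc e) S D L m) = card A1 + card A2" by (simp add: eq card_Un_disjoint finA disj)
  then have h: "card (ES (Suc e) S D L m) = card (FS e S D L (L ?c)) * (2 * r ?c * m) + card (ES e S D L m) * card Z"
    using c1 c2 fin by auto
  have iZ: "int (card Z) = int (N ?c) - 2 * int (r ?c) * int (L ?c)" using cZ YN by (simp add: of_nat_diff)
  have "int (card (ES (Suc e) S D L m)) = int (card (FS e S D L (L ?c))) * (2 * int (r ?c) * int m)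
     + int (card (ES e S D L m)) * int (card Z)" unfolding h by simp
  also have "\<dots> = 2 * int (r ?c) * int m * int (card (FS e S D L (L ?c)))
     + (int (N ?c) - 2 * int (r ?c) * int (L ?c)) * int (card (ES e S D L m))"
    unfolding iZ by (rule arith2)
  finally show ?thesis .
qed

lemma ES_formula:
  assumes I: "inst d S D N L r"
  shows "e \<le> d \<Longrightarrow> (\<forall>k\<in>{1..e}. m \<le> L k) \<Longrightarrow> int (card (ES e S D L m)) =
    (\<Sum>i=1..e. 2 * int (r i) * int m * int (card (FS (i-1) S D L (L i)))
       * (\<Prod>k\<in>{i<..<Suc e}. int (N k) - 2 * int (r k) * int (L k)))"
proof (induction e)
  case 0
  then show ?case by (simp add: ES_def)
next
  case (Suc e)
  let ?P = "\<lambda>k. int (N k) - 2 * int (r k) * int (L k)"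
  let ?f = "\<lambda>i. 2 * int (r i) * int m * int (card (FS (i-1) S D L (L i)))"
  have IH: "int (card (ES e S D L m)) = (\<Sum>i=1..e. ?f i * (\<Prod>k\<in>{i<..<Suc e}. ?P k))"
    using Suc by auto
  have mL: "m \<le> L (Suc e)" using Suc.prems by auto
  have st: "int (card (ES (Suc e) S D L m)) = ?f (Suc e) + ?P (Suc e) * int (card (ES e S D L m))"
    using ES_Suc_card[OF I Suc.prems(1) mL] by simp
  have pr: "(\<Prod>k\<in>{i<..<Suc (Suc e)}. ?P k) = ?P (Suc e) * (\<Prod>k\<in>{i<..<Suc e}. ?P k)" if "i \<in> {1..e}" for i
  proof -
    have "{i<..<Suc (Suc e)} = insert (Suc e) {i<..<Suc e}" using that by auto
    then show ?thesis by simp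
  qed
  have "(\<Sum>i=1..Suc e. ?f i * (\<Prod>k\<in>{i<..<Suc (Suc e)}. ?P k))
      = ?f (Suc e) * (\<Prod>k\<in>{Suc e<..<Suc (Suc e)}. ?P k) + (\<Sum>i=1..e. ?f i * (\<Prod>k\<in>{i<..<Suc (Suc e)}. ?P k))"
    by (rule sum.nat_ivl_Suc') simp
  also have "(\<Sum>i=1..e. ?f i * (\<Prod>k\<in>{i<..<Suc (Suc e)}. ?P k)) = (\<Sum>i=1..e. ?P (Suc e) * (?f i * (\<Prod>k\<in>{i<..<Suc e}. ?P k)))"
    by (rule sum.cong[OF refl]) (simp add: pr)
  also have "\<dots> = ?P (Suc e) * (\<Sum>i=1..e. ?f i * (\<Prod>k\<in>{i<..<Suc e}. ?P k))"
    by (rule sum_distrib_left[symmetric])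
  also have "{Suc e<..<Suc (Suc e)} = {}" by auto
  finally show ?case unfolding st IH by simp
qed

lemma FS_reduce:
  assumes I: "inst e S D N L r" and m: "\<forall>k\<in>{1..e}. m \<le> L k"
  shows "FS e S D L m = VS e (\<lambda>k. {x \<in> S k. m < D k x}) (\<lambda>k x. D k x - m) (\<lambda>k. L k - m)"
    and "inst e (\<lambda>k. {x \<in> S k. m < D k x}) (\<lambda>k x. D k x - m) (\<lambda>k. N k - 2 * r k * m) (\<lambda>k. L k - m) r"
    and "\<forall>k\<in>{1..e}. 2 * r k * m \<le> N k"
proof -
  have cm: "card {x \<in> S k. D k x \<le> m'} = 2 * r k * m'" if "k \<in> {1..e}" "m' \<le> L k" for k m'
    using I that by (auto simp: inst_def)
  have finS: "finite (S k)" "card (S k) = N k" if "k \<in> {1..e}" for k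
    using I that by (auto simp: inst_def)
  show le: "\<forall>k\<in>{1..e}. 2 * r k * m \<le> N k"
  proof
    fix k assume k: "k \<in> {1..e}"
    have "card {x \<in> S k. D k x \<le> m} \<le> card (S k)" by (rule card_mono) (use finS[OF k] in auto)
    then show "2 * r k * m \<le> N k" using cm[OF k] m k finS[OF k] by simp
  qed
  show "FS e S D L m = VS e (\<lambda>k. {x \<in> S k. m < D k x}) (\<lambda>k x. D k x - m) (\<lambda>k. L k - m)"
  proof (rule set_eqI)
    fix p
    have AVeq: "AV e D L p = AV e (\<lambda>k x. D k x - m) (\<lambda>k. L k - m) p" if "\<forall>i\<in>{1..e}. m < D i (p i)"
    proof -
      have "(D i (p i) \<le> L j) = (D i (p i) - m \<le> L j - m)" if "i \<in> {1..e}" "j \<in> {1..e}" for i j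
        using that \<open>\<forall>i\<in>{1..e}. m < D i (p i)\<close> m by force
      then have eq2: "(D i (p i) \<le> L j \<and> D j (p j) \<le> L j) = (D i (p i) - m \<le> L j - m \<and> D j (p j) - m \<le> L j - m)"
        if "1 \<le> i" "i < j" "j \<le> e" for i j
        using that by simp
      show ?thesis unfolding AV_def
      proof (intro iffI allI impI)
        fix i j assume H: "\<forall>i j. 1 \<le> i \<longrightarrow> i < j \<longrightarrow> j \<le> e \<longrightarrow> \<not> (D i (p i) \<le> L j \<and> D j (p j) \<le> L j)"
          and a: "1 \<le> i" "i < j" "j \<le> e"
        show "\<not> (D i (p i) - m \<le> L j - m \<and> D j (p j) - m \<le> L j - m)"
          using H a eq2[OF a] by blast
      next
        fix i j assume H: "\<forall>i j. 1 \<le> i \<longrightarrow> i < j \<longrightarrow> j \<le> e \<longrightarrow> \<not> (D i (p i) - m \<le> L j - m \<and> D j (p j) - m \<le> L j - m)"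
          and a: "1 \<le> i" "i < j" "j \<le> e"
        show "\<not> (D i (p i) \<le> L j \<and> D j (p j) \<le> L j)"
          using H a eq2[OF a] by blast
      qed
    qed
    show "p \<in> FS e S D L m \<longleftrightarrow> p \<in> VS e (\<lambda>k. {x \<in> S k. m < D k x}) (\<lambda>k x. D k x - m) (\<lambda>k. L k - m)"
    proof (cases "\<forall>i\<in>{1..e}. m < D i (p i)")
      case True
      have "p \<in> Pi\<^sub>E {1..e} (\<lambda>k. {x \<in> S k. m < D k x}) \<longleftrightarrow> p \<in> Pi\<^sub>E {1..e} S"
        using True by (auto simp: PiE_iff)
      then show ?thesis unfolding FS_def VS_def using True AVeq[OF True] by simp
    next
      case False
      then have "p \<notin> Pi\<^sub>E {1..e} (\<lambda>k. {x \<in> S k. m < D k x})" by (auto simp: PiE_iff)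
      then show ?thesis unfolding FS_def VS_def using False by simp
    qed
  qed
  show "inst e (\<lambda>k. {x \<in> S k. m < D k x}) (\<lambda>k x. D k x - m) (\<lambda>k. N k - 2 * r k * m) (\<lambda>k. L k - m) r"
    unfolding inst_def
  proof (intro conjI ballI allI impI)
    fix k assume k: "k \<in> {1..e}"
    show "finite {x \<in> S k. m < D k x}" using finS[OF k] by simp
    have split: "S k = {x \<in> S k. m < D k x} \<union> {x \<in> S k. D k x \<le> m}" by auto
    have "card (S k) = card {x \<in> S k. m < D k x} + card {x \<in> S k. D k x \<le> m}"
      by (subst split, rule card_Un_disjoint) (use finS[OF k] in auto)
    then show "card {x \<in> S k. m < D k x} = N k - 2 * r k * m" using finS[OF k] cm[OF k] m k by simp
    fix m' assume m': "m' \<le> L k - m"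
    have split2: "{x \<in> S k. D k x \<le> m' + m} = {x \<in> {x \<in> S k. m < D k x}. D k x - m \<le> m'} \<union> {x \<in> S k. D k x \<le> m}"
      by auto
    have "card {x \<in> S k. D k x \<le> m' + m} = card {x \<in> {x \<in> S k. m < D k x}. D k x - m \<le> m'} + card {x \<in> S k. D k x \<le> m}"
      by (subst split2, rule card_Un_disjoint) (use finS[OF k] in auto)
    moreover have "card {x \<in> S k. D k x \<le> m' + m} = 2 * r k * (m' + m)" proof -
      have "m \<le> L k" using m k by auto
      then have "m' + m \<le> L k" using m' by linarith
      then show ?thesis by (rule cm[OF k])
    qed
    moreover have B: "card {x \<in> S k. D k x \<le> m} = 2 * r k * m" by (rule cm[OF k]) (use m k in auto)
    ultimately have "card {x \<in> {x \<in> S k. m < D k x}. D k x - m \<le> m'} + 2 * r k * m = 2 * r k * m' + 2 * r k * m"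
      by (simp only: distrib_left)
    then show "card {x \<in> {x \<in> S k. m < D k x}. D k x - m \<le> m'} = 2 * r k * m'"
      by (rule add_right_imp_eq)
  next
    fix i j assume "1 \<le> i" "i < j" "j \<le> e"
    moreover have "L j < L i" using I \<open>1 \<le> i\<close> \<open>i < j\<close> \<open>j \<le> e\<close> unfolding inst_def by blast
    moreover have "m \<le> L j" using m \<open>1 \<le> i\<close> \<open>i < j\<close> \<open>j \<le> e\<close> by auto
    ultimately show "L j - m < L i - m" by (intro diff_less_mono)
  qed
qed

theorem abstract_count: "inst d S D N L r \<Longrightarrow> int (card (VS d S D L)) = Qf d (\<lambda>k. int (N k)) L r"
proof (induction d arbitrary: S D N L r rule: less_induct)
  case (less d)
  note I = less.prems
  show ?case
  proof (cases d)
    case 0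
    have "VS 0 S D L = {\<lambda>_. undefined}" by (simp add: VS_def AV_def)
    moreover have "Qf 0 (\<lambda>k. int (N k)) L r = 1" by (subst Qf.simps) simp
    ultimately show ?thesis using 0 by simp
  next
    case (Suc e)
    let ?NN = "\<lambda>k. int (N k)"
    let ?c = "Suc e"
    let ?P = "\<lambda>k. int (N k) - 2 * int (r k) * int (L k)"
    let ?Q = "\<lambda>i. Qf (i - 1) (\<lambda>k. int (N k) - 2 * int (r k) * int (L i)) (\<lambda>k. L k - L i) r"
    have Ie: "inst e S D N L r" by (rule inst_mono[OF I]) (simp add: Suc)
    have V: "int (card (VS e S D L)) = Qf e ?NN L r" using less.IH[of e] Suc Ie by simp
    have mL: "\<forall>k\<in>{1..e}. L ?c \<le> L k"
    proof
      fix k assume "k \<in> {1..e}"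
      then show "L ?c \<le> L k" using I Suc unfolding inst_def by (metis atLeastAtMost_iff le_imp_less_Suc less_imp_le_nat order_refl)
    qed
    have E: "int (card (ES e S D L (L ?c))) = (\<Sum>i=1..e. 2 * int (r i) * int (L ?c) * int (card (FS (i-1) S D L (L i)))
       * (\<Prod>k\<in>{i<..<Suc e}. ?P k))"
      by (rule ES_formula[OF I]) (simp add: Suc, rule mL)
    have F: "int (card (FS (i-1) S D L (L i))) = ?Q i" if "i \<in> {1..e}" for i
    proof -
      have Ii: "inst (i-1) S D N L r" by (rule inst_mono[OF I]) (use that Suc in auto)
      have mi: "\<forall>k\<in>{1..i-1}. L i \<le> L k"
      proof
        fix k assume k: "k \<in> {1..i-1}"
        have "1 \<le> k" "k < i" "i \<le> d" using k that Suc by auto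
        then have "L i < L k" using I unfolding inst_def by blast
        then show "L i \<le> L k" by simp
      qed
      note red = FS_reduce[OF Ii mi]
      have "int (card (VS (i-1) (\<lambda>k. {x \<in> S k. L i < D k x}) (\<lambda>k x. D k x - L i) (\<lambda>k. L k - L i)))
          = Qf (i-1) (\<lambda>k. int (N k - 2 * r k * L i)) (\<lambda>k. L k - L i) r"
        by (rule less.IH) (use that Suc red(2) in auto)
      also have "\<dots> = ?Q i"
        by (rule Qf_cong) (use red(3) in \<open>auto simp: of_nat_diff\<close>)
      finally show ?thesis using red(1) by simp
    qed
    have E2: "int (card (ES e S D L (L ?c))) = 2 * int (L ?c) * (\<Sum>i=1..e. int (r i) * ?Q i * (\<Prod>k\<in>{i<..<Suc e}. ?P k))"
      unfolding E sum_distrib_left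
    proof (rule sum.cong[OF refl])
      fix i assume i: "i \<in> {1..e}"
      show "2 * int (r i) * int (L ?c) * int (card (FS (i-1) S D L (L i))) * (\<Prod>k\<in>{i<..<Suc e}. ?P k)
         = 2 * int (L ?c) * (int (r i) * ?Q i * (\<Prod>k\<in>{i<..<Suc e}. ?P k))"
        unfolding F[OF i] by (simp add: algebra_simps)
    qed
    have "int (card (VS d S D L)) = ?NN ?c * Qf e ?NN L r - 2 * int (r ?c) * int (L ?c) * int (card (ES e S D L (L ?c)))"
      using VS_Suc_card[OF I, of e] Suc V by simp
    also have "\<dots> = Qf d ?NN L r"
      unfolding Suc Qf_Suc E2 by (simp add: power2_eq_square)
    finally show ?thesis .
  qed
qed

lemma in_window_iff:
  fixes n m y :: int
  assumes n: "0 < n" and m: "0 \<le> m" "2 * m \<le> n"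
  shows "in_window n m y \<longleftrightarrow> (y + m - 1) mod n < 2 * m"
proof
  assume "in_window n m y"
  then obtain w where w: "w \<in> window n m" "y mod n = w mod n" unfolding in_window_def by blast
  have "(y + m - 1) mod n = (w + m - 1) mod n" using w(2)
    by (metis mod_add_left_eq mod_diff_left_eq)
  moreover have "(w + m - 1) mod n < 2 * m"
  proof (cases "w \<le> m")
    case True
    then have "1 \<le> w" using w(1) m by (auto simp: window_def)
    then have "(w + m - 1) mod n = w + m - 1" using True m n by (intro mod_pos_pos_trivial) auto
    then show ?thesis using True by simp
  next
    case False
    then have "n - m + 1 \<le> w" "w \<le> n" using w(1) by (auto simp: window_def)
    then have "(w + m - 1) mod n = (w + m - 1 - n) mod n" using minus_mod_self2[of "w + m - 1" n] by simp
    also have "\<dots> = w + m - 1 - n" using \<open>n - m + 1 \<le> w\<close> \<open>w \<le> n\<close> m n False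
      by (intro mod_pos_pos_trivial) auto
    finally show ?thesis using \<open>w \<le> n\<close> m by simp
  qed
  ultimately show "(y + m - 1) mod n < 2 * m" by simp
next
  assume t: "(y + m - 1) mod n < 2 * m"
  define t where "t = (y + m - 1) mod n"
  have t0: "0 \<le> t" "t < n" using n by (auto simp: t_def)
  have ty: "(t - m + 1) mod n = y mod n"
  proof -
    have "(t - (m - 1)) mod n = (y + m - 1 - (m - 1)) mod n" unfolding t_def by (simp add: mod_diff_left_eq)
    then show ?thesis by (simp add: algebra_simps)
  qed
  show "in_window n m y"
  proof (cases "m \<le> t")
    case True
    have "t - m + 1 \<in> window n m" using True t t_def by (auto simp: window_def)
    then show ?thesis unfolding in_window_def using ty by (intro bexI[of _ "t - m + 1"]) auto
  next
    case False
    have "t - m + 1 + n \<in> window n m" using False t0 by (auto simp: window_def)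
    moreover have "(t - m + 1 + n) mod n = y mod n" using ty by simp
    ultimately show ?thesis unfolding in_window_def by (intro bexI[of _ "t - m + 1 + n"]) auto
  qed
qed

lemma bij_shift_mod:
  fixes n c :: int
  assumes n: "0 < n"
  shows "bij_betw (\<lambda>x. (x + c) mod n) {1..n} {0..<n}"
proof -
  have inj: "inj_on (\<lambda>x. (x + c) mod n) {1..n}"
  proof (rule inj_onI)
    fix x y assume x: "x \<in> {1..n}" and y: "y \<in> {1..n}" and e: "(x + c) mod n = (y + c) mod n"
    then have "n dvd (x + c) - (y + c)" by (simp add: mod_eq_dvd_iff)
    then have d: "n dvd x - y" by simp
    have "\<bar>x - y\<bar> < n" using x y by auto
    obtain k where k: "x - y = n * k" using d by (auto elim: dvdE)
    have ak: "\<bar>x - y\<bar> = n * \<bar>k\<bar>" using k n by (simp add: abs_mult)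
    have "k = 0"
    proof (rule ccontr)
      assume "k \<noteq> 0"
      then have "1 \<le> \<bar>k\<bar>" by simp
      then have "n * 1 \<le> n * \<bar>k\<bar>" using n by (intro mult_left_mono) auto
      then show False using ak \<open>\<bar>x - y\<bar> < n\<close> by simp
    qed
    then show "x = y" using k by simp
  qed
  have sub: "(\<lambda>x. (x + c) mod n) ` {1..n} \<subseteq> {0..<n}" using n by auto
  have "card ((\<lambda>x. (x + c) mod n) ` {1..n}) = card {0..<n}"
    using card_image[OF inj] n by simp
  then have "(\<lambda>x. (x + c) mod n) ` {1..n} = {0..<n}"
    by (intro card_subset_eq sub) auto
  then show ?thesis using inj by (simp add: bij_betw_def)
qed

lemma card_preimage_bij:
  assumes "bij_betw f A B" "W \<subseteq> B"
  shows "card {x \<in> A. f x \<in> W} = card W"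
proof -
  have "f ` {x \<in> A. f x \<in> W} = W" using assms unfolding bij_betw_def by blast
  have "bij_betw f {x \<in> A. f x \<in> W} W"
    by (rule bij_betw_subset[OF assms(1) _ \<open>f ` {x \<in> A. f x \<in> W} = W\<close>]) auto
  then show ?thesis by (rule bij_betw_same_card)
qed

lemma card_block:
  fixes n c :: int and m :: nat
  assumes n: "0 < n" "2 * int m \<le> n"
  shows "card {x \<in> {1..n}. (x + c) mod n < 2 * int m} = 2 * m"
proof -
  have "{x \<in> {1..n}. (x + c) mod n < 2 * int m} = {x \<in> {1..n}. (x + c) mod n \<in> {0..<2 * int m}}"
    using n by auto
  also have "card \<dots> = card {0..<2 * int m}"
    by (rule card_preimage_bij[OF bij_shift_mod[OF n(1)]]) (use n in auto)
  finally show ?thesis by simp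
qed

lemma card_runs:
  fixes n :: int and s :: "nat \<Rightarrow> int" and m R :: nat
  assumes n: "0 < n" "2 * int m \<le> n"
    and sep: "\<And>a b. 1 \<le> a \<Longrightarrow> a < b \<Longrightarrow> b \<le> R \<Longrightarrow> 2 * int m \<le> s b - s a \<and> s b - s a \<le> n - 2 * int m"
  shows "card {x \<in> {1..n}. \<exists>a\<in>{1..R}. (x + s a) mod n < 2 * int m} = R * (2 * m)"
proof -
  define B where "B a = {x \<in> {1..n}. (x + s a) mod n < 2 * int m}" for a
  have eq: "{x \<in> {1..n}. \<exists>a\<in>{1..R}. (x + s a) mod n < 2 * int m} = (\<Union>a\<in>{1..R}. B a)"
    by (auto simp: B_def)
  have cB: "card (B a) = 2 * m" for a unfolding B_def by (rule card_block[OF n])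
  have dj: "B a \<inter> B b = {}" if "1 \<le> a" "a < b" "b \<le> R" for a b
  proof -
    { fix x assume xa: "x \<in> B a" and xb: "x \<in> B b"
      define u where "u = (x + s a) mod n"
      define t where "t = s b - s a"
      have u: "0 \<le> u" "u < 2 * int m" using xa n by (auto simp: B_def u_def)
      have t: "2 * int m \<le> t" "t \<le> n - 2 * int m" using sep[OF that] by (auto simp: t_def)
      have e1: "((x + s a) mod n + t) mod n = (x + s a + t) mod n" by (rule mod_add_left_eq)
      have e2: "x + s a + t = x + s b" by (simp add: t_def)
      have "(x + s b) mod n = (u + t) mod n" using e1 e2 unfolding u_def by simp
      also have "\<dots> = u + t" using u t by (intro mod_pos_pos_trivial) auto
      finally have "(x + s b) mod n \<ge> 2 * int m" using u t by simp
      then have False using xb by (simp add: B_def) }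
    then show ?thesis by blast
  qed
  have "card (\<Union>a\<in>{1..R}. B a) = (\<Sum>a\<in>{1..R}. card (B a))"
  proof (rule card_UN_disjoint)
    show "finite {1..R}" by simp
    show "\<forall>i\<in>{1..R}. finite (B i)"
    proof
      fix i show "finite (B i)" unfolding B_def by (rule finite_subset[of _ "{1..n}"]) auto
    qed
    show "\<forall>i\<in>{1..R}. \<forall>j\<in>{1..R}. i \<noteq> j \<longrightarrow> B i \<inter> B j = {}"
    proof (intro ballI impI)
      fix i j assume "i \<in> {1..R}" "j \<in> {1..R}" "i \<noteq> j"
      then show "B i \<inter> B j = {}"
        using dj[of i j] dj[of j i] by (cases "i < j") (auto simp: Int_commute)
    qed
  qed
  then show ?thesis unfolding eq cB by simp
qed

definition Dc :: "(nat \<Rightarrow> nat) \<Rightarrow> (nat \<Rightarrow> nat) \<Rightarrow> (nat \<Rightarrow> nat) \<Rightarrow> (nat \<Rightarrow> nat \<Rightarrow> nat) \<Rightarrow> nat \<Rightarrow> int \<Rightarrow> nat" where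
  "Dc n l r g k x = (LEAST m. \<exists>a\<in>{1..r k}. in_window (int (n k)) (int m) (run_end l g (\<lambda>_. x) k a))"

lemma in_window_mono:
  assumes "in_window n m' y" "m' \<le> m" "0 \<le> m'"
  shows "in_window n m y"
proof -
  have "window n m' \<subseteq> window n m" using assms(2,3) by (auto simp: window_def)
  then show ?thesis using assms(1) unfolding in_window_def by blast
qed

lemma in_window_full:
  assumes "0 < n" shows "in_window n n y"
proof -
  have "(y - 1) mod n < n" "0 \<le> (y - 1) mod n" using assms by auto
  then have "(y - 1) mod n + 1 \<in> window n n" by (auto simp: window_def)
  moreover have "((y - 1) mod n + 1) mod n = y mod n"
  proof -
    have "((y - 1) mod n + 1) mod n = (y - 1 + 1) mod n" by (rule mod_add_left_eq)
    then show ?thesis by simp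
  qed
  ultimately show ?thesis unfolding in_window_def by (intro bexI[of _ "(y - 1) mod n + 1"]) auto
qed

lemma Dc_le:
  assumes "1 \<le> r k" "0 < n k"
  shows "Dc n l r g k x \<le> m \<longleftrightarrow> (\<exists>a\<in>{1..r k}. in_window (int (n k)) (int m) (run_end l g (\<lambda>_. x) k a))"
proof -
  let ?P = "\<lambda>m. \<exists>a\<in>{1..r k}. in_window (int (n k)) (int m) (run_end l g (\<lambda>_. x) k a)"
  have ex: "?P (n k)" using assms in_window_full[of "int (n k)"] by (intro bexI[of _ 1]) auto
  show ?thesis
  proof
    assume le: "Dc n l r g k x \<le> m"
    have "?P (Dc n l r g k x)" unfolding Dc_def by (rule LeastI[of ?P, OF ex])
    then show "?P m" using le in_window_mono by (meson of_nat_0_le_iff of_nat_le_iff)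
  next
    assume "?P m"
    then show "Dc n l r g k x \<le> m" unfolding Dc_def by (rule Least_le)
  qed
qed

lemma run_end_const: "run_end l g p i a = run_end l g (\<lambda>_. p i) i a"
  by (simp add: run_end_def)

lemma valid_iff:
  assumes P: "params_ok d n l r"
  shows "valid d n l r g p \<longleftrightarrow> AV d (Dc n l r g) l p"
proof -
  have eqv: "(Dc n l r g i (p i) \<le> l j \<and> Dc n l r g j (p j) \<le> l j) \<longleftrightarrow>
      (\<exists>a\<in>{1..r i}. in_window (int (n i)) (int (l j)) (run_end l g p i a)) \<and>
      (\<exists>b\<in>{1..r j}. in_window (int (n j)) (int (l j)) (run_end l g p j b))"
    if "1 \<le> i" "i < j" "j \<le> d" for i j
  proof -
    have "1 \<le> r i" "0 < n i" "1 \<le> r j" "0 < n j" using P that unfolding params_ok_def by auto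
    then show ?thesis using Dc_le[of r i n] Dc_le[of r j n] run_end_const[of l g p] by simp
  qed
  show ?thesis unfolding valid_def AV_def
  proof
    assume H: "\<not> (\<exists>i j a b. 1 \<le> i \<and> i < j \<and> j \<le> d \<and> a \<in> {1..r i} \<and> b \<in> {1..r j} \<and>
          in_window (int (n i)) (int (l j)) (run_end l g p i a) \<and>
          in_window (int (n j)) (int (l j)) (run_end l g p j b))"
    show "\<forall>i j. 1 \<le> i \<longrightarrow> i < j \<longrightarrow> j \<le> d \<longrightarrow> \<not> (Dc n l r g i (p i) \<le> l j \<and> Dc n l r g j (p j) \<le> l j)"
    proof (intro allI impI)
      fix i j assume a: "1 \<le> i" "i < j" "j \<le> d"
      show "\<not> (Dc n l r g i (p i) \<le> l j \<and> Dc n l r g j (p j) \<le> l j)"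
        unfolding eqv[OF a] using H a by blast
    qed
  next
    assume H: "\<forall>i j. 1 \<le> i \<longrightarrow> i < j \<longrightarrow> j \<le> d \<longrightarrow> \<not> (Dc n l r g i (p i) \<le> l j \<and> Dc n l r g j (p j) \<le> l j)"
    show "\<not> (\<exists>i j a b. 1 \<le> i \<and> i < j \<and> j \<le> d \<and> a \<in> {1..r i} \<and> b \<in> {1..r j} \<and>
          in_window (int (n i)) (int (l j)) (run_end l g p i a) \<and>
          in_window (int (n j)) (int (l j)) (run_end l g p j b))"
    proof
      assume "\<exists>i j a b. 1 \<le> i \<and> i < j \<and> j \<le> d \<and> a \<in> {1..r i} \<and> b \<in> {1..r j} \<and>
          in_window (int (n i)) (int (l j)) (run_end l g p i a) \<and>
          in_window (int (n j)) (int (l j)) (run_end l g p j b)"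
      then obtain i j a b where a: "1 \<le> i" "i < j" "j \<le> d" and ab: "a \<in> {1..r i}" "b \<in> {1..r j}"
         "in_window (int (n i)) (int (l j)) (run_end l g p i a)"
          "in_window (int (n j)) (int (l j)) (run_end l g p j b)" by blast
      have "Dc n l r g i (p i) \<le> l j \<and> Dc n l r g j (p j) \<le> l j"
        unfolding eqv[OF a] using ab by blast
      then show False using H a by blast
    qed
  qed
qed

lemma gap_sep:
  fixes G :: "nat \<Rightarrow> nat" and R :: nat and n :: nat and l :: nat
  assumes gl: "\<forall>j\<in>{1..R}. 2 * l \<le> G j" and gs: "(\<Sum>j = 1..R. G j) = n"
    and ab: "1 \<le> a" "a < b" "b \<le> R"
  shows "2 * int l \<le> (\<Sum>c = 1..<b. int (G c)) - (\<Sum>c = 1..<a. int (G c))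
     \<and> (\<Sum>c = 1..<b. int (G c)) - (\<Sum>c = 1..<a. int (G c)) \<le> int n - 2 * int l"
proof -
  have split: "(\<Sum>c = 1..<a. int (G c)) + (\<Sum>c = a..<b. int (G c)) = (\<Sum>c = 1..<b. int (G c))"
    using ab by (intro sum.atLeastLessThan_concat) auto
  have lo: "int (G a) \<le> (\<Sum>c = a..<b. int (G c))"
    by (rule member_le_sum) (use ab in auto)
  have "a \<in> {1..R}" "b \<in> {1..R}" using ab by auto
  then have "2 * l \<le> G a" "2 * l \<le> G b" using gl by blast+
  then have ga: "2 * int l \<le> int (G a)" and gb: "2 * int l \<le> int (G b)" by linarith+
  have sub: "{a..<b} \<subseteq> {1..R}" using ab by auto
  have tot: "(\<Sum>c = 1..R. int (G c)) = int n" using gs by (metis of_nat_sum)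
  have "(\<Sum>c = 1..R. int (G c)) = (\<Sum>c \<in> {1..R} - {a..<b}. int (G c)) + (\<Sum>c = a..<b. int (G c))"
    by (rule sum.subset_diff[OF sub]) simp
  moreover have "int (G b) \<le> (\<Sum>c \<in> {1..R} - {a..<b}. int (G c))"
    by (rule member_le_sum) (use ab in auto)
  ultimately have hi: "(\<Sum>c = a..<b. int (G c)) \<le> int n - int (G b)" using tot by linarith
  show ?thesis using split lo ga gb hi by linarith
qed

lemma cnt_concrete:
  assumes P: "params_ok d n l r" and G: "gaps_ok d n l r g" and k: "k \<in> {1..d}" and m: "m \<le> l k"
  shows "card {x \<in> {1..int (n k)}. Dc n l r g k x \<le> m} = 2 * r k * m"
proof -
  have rk: "1 \<le> r k" "0 < n k" "2 * r k * l k \<le> n k" using P k unfolding params_ok_def by auto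
  have gl: "\<forall>j\<in>{1..r k}. 2 * l k \<le> g k j" and gs: "(\<Sum>j = 1..r k. g k j) = n k"
    using G k unfolding gaps_ok_def by auto
  have "2 * m \<le> 2 * r k * l k" using m rk(1)
    by (metis mult_le_mono mult.commute mult.left_commute nat_mult_1 le_refl)
  then have m2: "2 * int m \<le> int (n k)" using rk by linarith
  define s where "s a = (\<Sum>c = 1..<a. int (g k c)) + int (l k) - 1 + int m - 1" for a
  have eq: "{x \<in> {1..int (n k)}. Dc n l r g k x \<le> m} = {x \<in> {1..int (n k)}. \<exists>a\<in>{1..r k}. (x + s a) mod int (n k) < 2 * int m}"
  proof (rule Collect_cong)
    fix x
    have "Dc n l r g k x \<le> m \<longleftrightarrow> (\<exists>a\<in>{1..r k}. in_window (int (n k)) (int m) (run_end l g (\<lambda>_. x) k a))"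
      by (rule Dc_le) (use rk in auto)
    also have "\<dots> \<longleftrightarrow> (\<exists>a\<in>{1..r k}. (x + s a) mod int (n k) < 2 * int m)"
      using in_window_iff[of "int (n k)" "int m"] rk m2 by (simp add: run_end_def s_def algebra_simps)
    finally show "(x \<in> {1..int (n k)} \<and> Dc n l r g k x \<le> m) = (x \<in> {1..int (n k)} \<and> (\<exists>a\<in>{1..r k}. (x + s a) mod int (n k) < 2 * int m))"
      by simp
  qed
  have "card {x \<in> {1..int (n k)}. \<exists>a\<in>{1..r k}. (x + s a) mod int (n k) < 2 * int m} = r k * (2 * m)"
  proof (rule card_runs)
    show "0 < int (n k)" "2 * int m \<le> int (n k)" using rk m2 by auto
    fix a b assume ab: "1 \<le> a" "a < b" "b \<le> r k"
    have "s b - s a = (\<Sum>c = 1..<b. int (g k c)) - (\<Sum>c = 1..<a. int (g k c))" by (simp add: s_def)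
    then show "2 * int m \<le> s b - s a \<and> s b - s a \<le> int (n k) - 2 * int m"
      using gap_sep[OF gl gs ab] m by linarith
  qed
  then show ?thesis unfolding eq by simp
qed

theorem concrete_count:
  assumes P: "params_ok d n l r" and G: "gaps_ok d n l r g"
  shows "int (count_valid d n l r g) = Qf d (\<lambda>k. int (n k)) l r"
proof -
  have I: "inst d (\<lambda>k. {1..int (n k)}) (Dc n l r g) n l r"
    unfolding inst_def
  proof (intro conjI ballI allI impI)
    fix k assume k: "k \<in> {1..d}"
    show "finite {1..int (n k)}" by simp
    show "card {1..int (n k)} = n k" by simp
    fix m assume "m \<le> l k"
    then show "card {x \<in> {1..int (n k)}. Dc n l r g k x \<le> m} = 2 * r k * m"
      by (rule cnt_concrete[OF P G k])
  next
    fix i j :: nat assume "1 \<le> i" "i < j" "j \<le> d"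
    then show "l j < l i" using P unfolding params_ok_def by blast
  qed
  have "count_valid d n l r g = card (VS d (\<lambda>k. {1..int (n k)}) (Dc n l r g) l)"
    unfolding count_valid_def VS_def using valid_iff[OF P] by simp
  then show ?thesis using abstract_count[OF I] by simp
qed

lemma gaps_exist:
  assumes P: "params_ok d n l r"
  shows "gaps_ok d n l r (\<lambda>i j. if j = r i then n i - 2 * l i * (r i - 1) else 2 * l i)"
  unfolding gaps_ok_def
proof (rule ballI, rule conjI)
  fix i assume i: "i \<in> {1..d}"
  have rk: "1 \<le> r i" "2 * r i * l i \<le> n i" using P i unfolding params_ok_def by auto
  have A: "2 * l i * (r i - 1) + 2 * l i = 2 * r i * l i" using rk(1)
    by (cases "r i") (auto simp: algebra_simps)
  show "\<forall>j\<in>{1..r i}. 2 * l i \<le> (if j = r i then n i - 2 * l i * (r i - 1) else 2 * l i)"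
    using rk A by auto
  have ins: "{1..r i} = insert (r i) {1..r i - 1}" using rk(1) by auto
  have "(\<Sum>j = 1..r i. (if j = r i then n i - 2 * l i * (r i - 1) else 2 * l i))
     = (n i - 2 * l i * (r i - 1)) + (\<Sum>j = 1..r i - 1. (if j = r i then n i - 2 * l i * (r i - 1) else 2 * l i))"
    unfolding ins by (subst sum.insert) auto
  also have "(\<Sum>j = 1..r i - 1. (if j = r i then n i - 2 * l i * (r i - 1) else 2 * l i)) = (\<Sum>j = 1..r i - 1. 2 * l i)"
    by (rule sum.cong) auto
  also have "\<dots> = 2 * l i * (r i - 1)" by simp
  finally show "(\<Sum>j = 1..r i. (if j = r i then n i - 2 * l i * (r i - 1) else 2 * l i)) = n i"
    using rk A by simp
qed

lemma Pcount_eq: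
  assumes P: "params_ok d n l r"
  shows "int (Pcount d n l r) = Qf d (\<lambda>k. int (n k)) l r"
proof -
  have "gaps_ok d n l r (SOME g. gaps_ok d n l r g)" by (rule someI[where P="gaps_ok d n l r", OF gaps_exist[OF P]])
  then show ?thesis unfolding Pcount_def by (rule concrete_count[OF P])
qed

function QP :: "nat \<Rightarrow> (nat \<Rightarrow> int) \<Rightarrow> (nat \<Rightarrow> nat) \<Rightarrow> (nat \<Rightarrow> nat) \<Rightarrow> int poly" where
 "QP d c L r = (\<Prod>i = 1..d. [:c i, 1:]) - smult 4 (\<Sum>i = 1..d. \<Sum>j = i + 1..d.
     smult (int (r i) * int (r j) * int (L j) ^ 2)
      (QP (i - 1) (\<lambda>k. c k - 2 * int (r k) * int (L i)) (\<lambda>k. L k - L i) r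
       * (\<Prod>k \<in> {i<..<j}. [:c k - 2 * int (r k) * int (L k), 1:])
       * (\<Prod>k \<in> {j<..d}. [:c k, 1:])))"
  by pat_completeness auto
termination by (relation "measure (\<lambda>(d,_,_,_). d)") auto

declare QP.simps[simp del]

lemma poly_QP: "poly (QP d c L r) X = Qf d (\<lambda>k. X + c k) L r"
proof (induction d arbitrary: c L rule: less_induct)
  case (less d)
  have IH: "poly (QP (i - 1) (\<lambda>k. c k - 2 * int (r k) * int (L i)) (\<lambda>k. L k - L i) r) X
      = Qf (i - 1) (\<lambda>k. (X + c k) - 2 * int (r k) * int (L i)) (\<lambda>k. L k - L i) r" if "i \<in> {1..d}" for i
  proof -
    have "poly (QP (i - 1) (\<lambda>k. c k - 2 * int (r k) * int (L i)) (\<lambda>k. L k - L i) r) X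
       = Qf (i - 1) (\<lambda>k. X + (c k - 2 * int (r k) * int (L i))) (\<lambda>k. L k - L i) r"
      by (rule less.IH) (use that in auto)
    also have "(\<lambda>k. X + (c k - 2 * int (r k) * int (L i))) = (\<lambda>k. (X + c k) - 2 * int (r k) * int (L i))"
      by (simp add: algebra_simps)
    finally show ?thesis .
  qed
  show ?case
    apply (subst QP.simps) apply (subst Qf.simps)
    apply (simp only: poly_diff poly_smult poly_sum poly_mult poly_prod)
    apply (rule arg_cong2[where f="(-)"])
     apply (simp add: algebra_simps)
    apply (rule arg_cong2[where f="(*)"], rule refl)
    apply (rule sum.cong[OF refl])+
    apply (simp only: IH)
    apply (simp add: algebra_simps)
    done
qed

lemma prod_lin: "degree (\<Prod>i\<in>A. [:a i, 1::int:]) = card A \<and> lead_coeff (\<Prod>i\<in>A. [:a i, 1::int:]) = 1"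
  if "finite A"
proof -
  have "degree (\<Prod>i\<in>A. [:a i, 1::int:]) = (\<Sum>i\<in>A. degree [:a i, 1::int:])"
    by (rule degree_prod_eq_sum_degree) auto
  moreover have "lead_coeff (\<Prod>i\<in>A. [:a i, 1::int:]) = (\<Prod>i\<in>A. lead_coeff [:a i, 1::int:])"
    by (rule lead_coeff_prod)
  ultimately show ?thesis by simp
qed

lemma prod_lin_le: "degree (\<Prod>i\<in>A. [:a i, 1::int:]) \<le> card A"
proof (cases "finite A")
  case True then show ?thesis using prod_lin[OF True] by simp
next
  case False then show ?thesis by simp
qed

lemma QP_monic: "degree (QP d c L r) = d \<and> lead_coeff (QP d c L r) = 1"
proof (induction d arbitrary: c L rule: less_induct)
  case (less d)
  define A where "A = (\<Prod>i = 1..d. [:c i, 1::int:])"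
  define B where "B = smult 4 (\<Sum>i = 1..d. \<Sum>j = i + 1..d.
     smult (int (r i) * int (r j) * int (L j) ^ 2)
      (QP (i - 1) (\<lambda>k. c k - 2 * int (r k) * int (L i)) (\<lambda>k. L k - L i) r
       * (\<Prod>k \<in> {i<..<j}. [:c k - 2 * int (r k) * int (L k), 1:])
       * (\<Prod>k \<in> {j<..d}. [:c k, 1:])))"
  have Q: "QP d c L r = A - B" unfolding A_def B_def by (subst QP.simps) simp
  have A: "degree A = d" "lead_coeff A = 1" using prod_lin[of "{1..d}" c] by (auto simp: A_def)
  show ?case
  proof (cases "d = 0")
    case True
    then have "B = 0" by (simp add: B_def)
    then show ?thesis using A Q by simp
  next
    case False
    have trm: "degree (smult (int (r i) * int (r j) * int (L j) ^ 2)
      (QP (i - 1) (\<lambda>k. c k - 2 * int (r k) * int (L i)) (\<lambda>k. L k - L i) r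
       * (\<Prod>k \<in> {i<..<j}. [:c k - 2 * int (r k) * int (L k), 1:])
       * (\<Prod>k \<in> {j<..d}. [:c k, 1:]))) \<le> d - 2" if "i \<in> {1..d}" "j \<in> {i+1..d}" for i j
    proof -
      have d1: "degree (QP (i - 1) (\<lambda>k. c k - 2 * int (r k) * int (L i)) (\<lambda>k. L k - L i) r) = i - 1"
        using less.IH[of "i - 1"] that by auto
      have d2: "degree (\<Prod>k \<in> {i<..<j}. [:c k - 2 * int (r k) * int (L k), 1:]) \<le> j - i - 1"
        using prod_lin_le[of "\<lambda>k. c k - 2 * int (r k) * int (L k)" "{i<..<j}"] by simp
      have d3: "degree (\<Prod>k \<in> {j<..d}. [:c k, 1:]) \<le> d - j"
        using prod_lin_le[of c "{j<..d}"] by simp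
      have "degree (smult (int (r i) * int (r j) * int (L j) ^ 2)
        (QP (i - 1) (\<lambda>k. c k - 2 * int (r k) * int (L i)) (\<lambda>k. L k - L i) r
         * (\<Prod>k \<in> {i<..<j}. [:c k - 2 * int (r k) * int (L k), 1:])
         * (\<Prod>k \<in> {j<..d}. [:c k, 1:])))
        \<le> degree (QP (i - 1) (\<lambda>k. c k - 2 * int (r k) * int (L i)) (\<lambda>k. L k - L i) r
         * (\<Prod>k \<in> {i<..<j}. [:c k - 2 * int (r k) * int (L k), 1:])
         * (\<Prod>k \<in> {j<..d}. [:c k, 1:]))" by (rule degree_smult_le)
      also have "\<dots> \<le> degree (QP (i - 1) (\<lambda>k. c k - 2 * int (r k) * int (L i)) (\<lambda>k. L k - L i) r
         * (\<Prod>k \<in> {i<..<j}. [:c k - 2 * int (r k) * int (L k), 1:])) + degree (\<Prod>k \<in> {j<..d}. [:c k, 1:])"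
        by (rule degree_mult_le)
      also have "\<dots> \<le> (degree (QP (i - 1) (\<lambda>k. c k - 2 * int (r k) * int (L i)) (\<lambda>k. L k - L i) r)
         + degree (\<Prod>k \<in> {i<..<j}. [:c k - 2 * int (r k) * int (L k), 1:])) + degree (\<Prod>k \<in> {j<..d}. [:c k, 1:])"
        using degree_mult_le by (rule add_right_mono)
      also have "\<dots> \<le> (i - 1) + (j - i - 1) + (d - j)" using d1 d2 d3 by linarith
      also have "\<dots> = d - 2" using that by auto
      finally show ?thesis .
    qed
    have "degree B \<le> d - 2" unfolding B_def
      by (rule order.trans[OF degree_smult_le], rule degree_sum_le, simp, rule degree_sum_le, simp)
         (use trm in auto)
    then have Bd: "degree (- B) < degree A" using A False by simp
    have QQ: "QP d c L r = - B + A" using Q by simp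
    have e1: "degree (- B + A) = degree A" by (rule degree_add_eq_right) (rule Bd)
    have e2: "lead_coeff (- B + A) = lead_coeff A" by (rule lead_coeff_add_le) (rule Bd)
    have "coeff B d = 0" using Bd A by (intro coeff_eq_0) simp
    then show ?thesis unfolding QQ e2 e1 using A by simp
  qed
qed

lemma params_sub:
  assumes P: "params_ok d n l r" and i: "i \<in> {1..d}"
  shows "params_ok (i - 1) (\<lambda>k. n k - 2 * r k * l i) (\<lambda>k. l k - l i) r"
  unfolding params_ok_def
proof (intro conjI ballI allI impI)
  fix k assume k: "k \<in> {1..i - 1}"
  have kd: "k \<in> {1..d}" "1 \<le> k" "k < i" "i \<le> d" using k i by auto
  have lik: "l i < l k" using P kd unfolding params_ok_def by blast
  have rk: "1 \<le> l k" "1 \<le> r k" "0 < n k" "2 * r k * l k \<le> n k" using P kd(1) unfolding params_ok_def by auto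
  have lt: "2 * r k * l i < 2 * r k * l k" using lik rk(2) by simp
  have ds: "2 * r k * (l k - l i) = 2 * r k * l k - 2 * r k * l i" by (simp add: diff_mult_distrib2)
  show "1 \<le> l k - l i" using lik by simp
  show "1 \<le> r k" by (rule rk(2))
  show "0 < n k - 2 * r k * l i" using lt rk(4) by linarith
  show "2 * r k * (l k - l i) \<le> n k - 2 * r k * l i" unfolding ds using lt rk(4) by linarith
next
  fix a b assume ab: "1 \<le> a" "a < b" "b \<le> i - 1"
  have "l b < l a" "l i < l b" using P ab i unfolding params_ok_def by auto
  then show "l b - l i < l a - l i" by simp
qed

lemma Pcount_sub:
  assumes P: "params_ok d n l r" and i: "i \<in> {1..d}"
  shows "int (Pcount (i - 1) (\<lambda>k. n k - 2 * r k * l i) (\<lambda>k. l k - l i) r)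
     = Qf (i - 1) (\<lambda>k. int (n k) - 2 * int (r k) * int (l i)) (\<lambda>k. l k - l i) r"
proof -
  have "int (Pcount (i - 1) (\<lambda>k. n k - 2 * r k * l i) (\<lambda>k. l k - l i) r)
     = Qf (i - 1) (\<lambda>k. int (n k - 2 * r k * l i)) (\<lambda>k. l k - l i) r"
    by (rule Pcount_eq[OF params_sub[OF P i]])
  also have "\<dots> = Qf (i - 1) (\<lambda>k. int (n k) - 2 * int (r k) * int (l i)) (\<lambda>k. l k - l i) r"
  proof (rule Qf_cong)
    fix k assume k: "k \<in> {1..i - 1}"
    have "0 < n k - 2 * r k * l i" using params_sub[OF P i] k unfolding params_ok_def by blast
    then show "int (n k - 2 * r k * l i) = int (n k) - 2 * int (r k) * int (l i)" by (simp add: of_nat_diff)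
  qed auto
  finally show ?thesis .
qed

theorem proposition5p5:
  fixes d :: nat and l r :: "nat \<Rightarrow> nat"
  assumes d_pos: "1 \<le> d"
    and l_pos: "\<forall>i \<in> {1..d}. 1 \<le> l i"
    and l_dec: "\<forall>i j. 1 \<le> i \<longrightarrow> i < j \<longrightarrow> j \<le> d \<longrightarrow> l j < l i"
    and r_pos: "\<forall>i \<in> {1..d}. 1 \<le> r i"
  shows
    "(\<forall>n :: nat \<Rightarrow> nat. params_ok d n l r \<longrightarrow>
        (\<forall>g g'. gaps_ok d n l r g \<longrightarrow> gaps_ok d n l r g' \<longrightarrow>
                count_valid d n l r g = count_valid d n l r g') \<and>
        (\<forall>g. gaps_ok d n l r g \<longrightarrow> count_valid d n l r g = Pcount d n l r) \<and>
        (d = 1 \<longrightarrow> Pcount 1 n l r = n 1) \<and>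
        int (Pcount d n l r) =
          (\<Prod>i = 1..d. int (n i))
          - 4 * (\<Sum>i = 1..d. \<Sum>j = i + 1..d.
                  int (r i) * int (r j) * int (l j) ^ 2
                  * int (Pcount (i - 1) (\<lambda>k. n k - 2 * r k * l i) (\<lambda>k. l k - l i) r)
                  * (\<Prod>k \<in> {i<..<j}. int (n k) - 2 * int (r k) * int (l k))
                  * (\<Prod>k \<in> {j<..d}. int (n k)))) \<and>
     (\<forall>n0 l0 r0 :: nat \<Rightarrow> nat. Pcount 0 n0 l0 r0 = 1) \<and>
     (\<exists>q :: int poly. lead_coeff q = 1 \<and> degree q = d \<and>
        (d = 1 \<longrightarrow> q = [: - int (l 1), 1 :]) \<and>
        (\<forall>N :: int.
           let nN = (\<lambda>i. N - int (l i)
                       - 2 * (\<Sum>j \<in> {1..d} - {i}. int (r j) * int (min (l i) (l j))))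
           in (\<forall>i \<in> {1..d}. 0 < nN i \<and> 2 * int (r i) * int (l i) \<le> nN i) \<longrightarrow>
              int (Pcount d (\<lambda>i. nat (nN i)) l r) = poly q N))"
proof -
  have part1: "\<forall>n :: nat \<Rightarrow> nat. params_ok d n l r \<longrightarrow>
        (\<forall>g g'. gaps_ok d n l r g \<longrightarrow> gaps_ok d n l r g' \<longrightarrow>
                count_valid d n l r g = count_valid d n l r g') \<and>
        (\<forall>g. gaps_ok d n l r g \<longrightarrow> count_valid d n l r g = Pcount d n l r) \<and>
        (d = 1 \<longrightarrow> Pcount 1 n l r = n 1) \<and>
        int (Pcount d n l r) =
          (\<Prod>i = 1..d. int (n i))
          - 4 * (\<Sum>i = 1..d. \<Sum>j = i + 1..d.
                  int (r i) * int (r j) * int (l j) ^ 2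
                  * int (Pcount (i - 1) (\<lambda>k. n k - 2 * r k * l i) (\<lambda>k. l k - l i) r)
                  * (\<Prod>k \<in> {i<..<j}. int (n k) - 2 * int (r k) * int (l k))
                  * (\<Prod>k \<in> {j<..d}. int (n k)))"
  proof (intro allI impI, intro conjI)
    fix n :: "nat \<Rightarrow> nat" assume P: "params_ok d n l r"
    have PE: "int (Pcount d n l r) = Qf d (\<lambda>k. int (n k)) l r" by (rule Pcount_eq[OF P])
    show "\<forall>g g'. gaps_ok d n l r g \<longrightarrow> gaps_ok d n l r g' \<longrightarrow> count_valid d n l r g = count_valid d n l r g'"
      using concrete_count[OF P] by (metis of_nat_eq_iff)
    show "\<forall>g. gaps_ok d n l r g \<longrightarrow> count_valid d n l r g = Pcount d n l r"
      using concrete_count[OF P] PE by (metis of_nat_eq_iff)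
    show "d = 1 \<longrightarrow> Pcount 1 n l r = n 1"
    proof
      assume d1: "d = 1"
      have "Qf 1 (\<lambda>k. int (n k)) l r = int (n 1)" by (subst Qf.simps) simp
      then show "Pcount 1 n l r = n 1" using PE d1 by simp
    qed
    have inner: "(\<Sum>j = i + 1..d. int (r i) * int (r j) * int (l j) ^ 2
                  * Qf (i - 1) (\<lambda>k. int (n k) - 2 * int (r k) * int (l i)) (\<lambda>k. l k - l i) r
                  * (\<Prod>k \<in> {i<..<j}. int (n k) - 2 * int (r k) * int (l k))
                  * (\<Prod>k \<in> {j<..d}. int (n k)))
        = (\<Sum>j = i + 1..d. int (r i) * int (r j) * int (l j) ^ 2
                  * int (Pcount (i - 1) (\<lambda>k. n k - 2 * r k * l i) (\<lambda>k. l k - l i) r)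
                  * (\<Prod>k \<in> {i<..<j}. int (n k) - 2 * int (r k) * int (l k))
                  * (\<Prod>k \<in> {j<..d}. int (n k)))" if "i \<in> {1..d}" for i
      unfolding Pcount_sub[OF P that] ..
    show "int (Pcount d n l r) =
          (\<Prod>i = 1..d. int (n i))
          - 4 * (\<Sum>i = 1..d. \<Sum>j = i + 1..d.
                  int (r i) * int (r j) * int (l j) ^ 2
                  * int (Pcount (i - 1) (\<lambda>k. n k - 2 * r k * l i) (\<lambda>k. l k - l i) r)
                  * (\<Prod>k \<in> {i<..<j}. int (n k) - 2 * int (r k) * int (l k))
                  * (\<Prod>k \<in> {j<..d}. int (n k)))"
      unfolding PE by (subst Qf.simps) (simp only: sum.cong[OF refl inner])
  qed
  have part2: "\<forall>n0 l0 r0 :: nat \<Rightarrow> nat. Pcount 0 n0 l0 r0 = 1"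
  proof (intro allI)
    fix n0 l0 r0 :: "nat \<Rightarrow> nat"
    have "params_ok 0 n0 l0 r0" by (simp add: params_ok_def)
    then have "int (Pcount 0 n0 l0 r0) = Qf 0 (\<lambda>k. int (n0 k)) l0 r0" by (rule Pcount_eq)
    also have "\<dots> = 1" by (subst Qf.simps) simp
    finally show "Pcount 0 n0 l0 r0 = 1" by simp
  qed
  define c where "c i = - int (l i) - 2 * (\<Sum>j \<in> {1..d} - {i}. int (r j) * int (min (l i) (l j)))" for i
  define q where "q = QP d c l r"
  have part3: "lead_coeff q = 1 \<and> degree q = d \<and>
        (d = 1 \<longrightarrow> q = [: - int (l 1), 1 :]) \<and>
        (\<forall>N :: int.
           let nN = (\<lambda>i. N - int (l i)
                       - 2 * (\<Sum>j \<in> {1..d} - {i}. int (r j) * int (min (l i) (l j))))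
           in (\<forall>i \<in> {1..d}. 0 < nN i \<and> 2 * int (r i) * int (l i) \<le> nN i) \<longrightarrow>
              int (Pcount d (\<lambda>i. nat (nN i)) l r) = poly q N)"
  proof (intro conjI)
    show "lead_coeff q = 1" "degree q = d" using QP_monic[of d c l r] by (auto simp: q_def)
    show "d = 1 \<longrightarrow> q = [: - int (l 1), 1 :]"
    proof
      assume d1: "d = 1"
      have "c 1 = - int (l 1)" using d1 by (simp add: c_def)
      then show "q = [: - int (l 1), 1 :]" unfolding q_def d1 by (subst QP.simps) simp
    qed
    show "\<forall>N :: int.
           let nN = (\<lambda>i. N - int (l i)
                       - 2 * (\<Sum>j \<in> {1..d} - {i}. int (r j) * int (min (l i) (l j))))
           in (\<forall>i \<in> {1..d}. 0 < nN i \<and> 2 * int (r i) * int (l i) \<le> nN i) \<longrightarrow>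
              int (Pcount d (\<lambda>i. nat (nN i)) l r) = poly q N"
      unfolding Let_def
    proof (intro allI impI)
      fix N :: int
      let ?nN = "\<lambda>i. N - int (l i) - 2 * (\<Sum>j \<in> {1..d} - {i}. int (r j) * int (min (l i) (l j)))"
      assume H: "\<forall>i \<in> {1..d}. 0 < ?nN i \<and> 2 * int (r i) * int (l i) \<le> ?nN i"
      have nc: "?nN i = N + c i" for i by (simp add: c_def)
      have P: "params_ok d (\<lambda>i. nat (?nN i)) l r"
        unfolding params_ok_def
      proof (intro conjI ballI allI impI)
        fix i assume i: "i \<in> {1..d}"
        show "1 \<le> l i" "1 \<le> r i" using l_pos r_pos i by auto
        show "0 < nat (?nN i)" using H i by auto
        have "int (2 * r i * l i) \<le> ?nN i" using H i by simp
        then show "2 * r i * l i \<le> nat (?nN i)" by linarith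
      next
        fix i j :: nat assume "1 \<le> i" "i < j" "j \<le> d"
        then show "l j < l i" using l_dec by blast
      qed
      have "int (Pcount d (\<lambda>i. nat (?nN i)) l r) = Qf d (\<lambda>k. int (nat (?nN k))) l r"
        by (rule Pcount_eq[OF P])
      also have "\<dots> = Qf d (\<lambda>k. N + c k) l r"
      proof (rule Qf_cong)
        fix k assume "k \<in> {1..d}"
        then have "0 < ?nN k" using H by auto
        then show "int (nat (?nN k)) = N + c k" using nc[of k] by simp
      qed auto
      also have "\<dots> = poly q N" unfolding q_def by (rule poly_QP[symmetric])
      finally show "int (Pcount d (\<lambda>i. nat (?nN i)) l r) = poly q N" .
    qed
  qed
  show ?thesis using part1 part2 part3 by blast
qed

end
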